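(* For every $\mathcal{L}_{A_m}^{\Box}$-formula $\varphi$: if $\varphi$ is derivable in the axiom system $\mathsf{K(A_m)}$, then $\varphi$ is $\mathsf{K(A)}$-valid.
   Context: $\mathcal{L}_{A_m}^{\Box}$-formulas are built from a countably infinite set $\mathrm{Var}$ of variables using binary $\to$ and unary $\Box$. Fix $p_0\in\mathrm{Var}$ and define $\overline{0}:=p_0\to p_0$, $\neg\varphi:=\varphi\to\overline{0}$, $\varphi\&\psi:=\neg\varphi\to\psi$, $0\varphi:=\overline{0}$, $(n+1)\varphi:=\varphi\&(n\varphi)$. A $\mathsf{K(A)}$-model $\langle W,R,V\rangle$: nonempty $W$, $R\subseteq W\times W$, $V\colon\mathrm{Var}\times W\to[-r,r]$ for some real $r\ge0$, extended by $V(\varphi\to\psi,x)=V(\psi,x)-V(\varphi,x)$ and $V(\Box\varphi,x)=\inf_{\mathbb{R}}\{V(\varphi,y):Rxy\}$ (empty infimum $=0$). $\varphi$ is $\mathsf{K(A)}$-valid if $V(\varphi,x)\ge0$ for all models and worlds. The axiom system $\mathsf{K(A_m)}$ has axiom schemas (B) $(\varphi\to\psi)\to((\psi\to\chi)\to(\varphi\to\chi))$; (C) $(\varphi\to(\psi\to\chi))\to(\psi\to(\varphi\to\chi))$; (I) $\varphi\to\varphi$; (A) $((\varphi\to\psi)\to\psi)\to\varphi$; (K) $\Box(\varphi\to\psi)\to(\Box\varphi\to\Box\psi)$; (D$_n$) $\Box(n\varphi)\to n\Box\varphi$ for $n\ge2$; and rules (mp) from $\varphi$ and $\varphi\to\psi$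 infer $\psi$; (nec) from $\varphi$ infer $\Box\varphi$; (con$_n$) from $n\varphi$ infer $\varphi$ for $n\ge2$. Derivations are finite sequences of formulas, each an axiom instance or obtained from earlier ones by a rule. *)

theory Defs
  imports Complex_Main
begin

datatype fm = Var nat | Imp fm fm (infixr "\<^bold>\<rightarrow>" 25) | Box fm

definition p0 :: nat where "p0 = 0"
definition Zero :: fm where "Zero = Imp (Var p0) (Var p0)"
definition Neg :: "fm \<Rightarrow> fm" where "Neg \<phi> = Imp \<phi> Zero"
definition Fus :: "fm \<Rightarrow> fm \<Rightarrow> fm" where "Fus \<phi> \<psi> = Imp (Neg \<phi>) \<psi>"

primrec mult :: "nat \<Rightarrow> fm \<Rightarrow> fm" where
  "mult 0 \<phi> = Zero"
| "mult (Suc n) \<phi> = Fus \<phi> (mult n \<phi>)"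

fun eval :: "('w \<Rightarrow> 'w \<Rightarrow> bool) \<Rightarrow> (nat \<Rightarrow> 'w \<Rightarrow> real) \<Rightarrow> fm \<Rightarrow> 'w \<Rightarrow> real" where
  "eval R V (Var p) x = V p x"
| "eval R V (Imp \<phi> \<psi>) x = eval R V \<psi> x - eval R V \<phi> x"
| "eval R V (Box \<phi>) x =
     (if {y. R x y} = {} then 0 else Inf {eval R V \<phi> y | y. R x y})"

definition is_model :: "'w set \<Rightarrow> ('w \<Rightarrow> 'w \<Rightarrow> bool) \<Rightarrow> (nat \<Rightarrow> 'w \<Rightarrow> real) \<Rightarrow> bool" where
  "is_model W R V \<longleftrightarrow> W \<noteq> {} \<and> (\<forall>x y. R x y \<longrightarrow> x \<in> W \<and> y \<in> W) \<and>
     (\<exists>r\<ge>0. \<forall>p. \<forall>x\<in>W. - r \<le> V p x \<and> V p x \<le> r)"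

text \<open>Validity relative to models whose worlds are drawn from the type 'w.
  The theorem quantifies over all types 'w, hence over all models.\<close>
definition KA_valid :: "'w itself \<Rightarrow> fm \<Rightarrow> bool" where
  "KA_valid _ \<phi> \<longleftrightarrow>
     (\<forall>(W::'w set) R V. is_model W R V \<longrightarrow> (\<forall>x\<in>W. eval R V \<phi> x \<ge> 0))"

inductive derivable :: "fm \<Rightarrow> bool" where
  ax_B: "derivable ((\<phi> \<^bold>\<rightarrow> \<psi>) \<^bold>\<rightarrow> ((\<psi> \<^bold>\<rightarrow> \<chi>) \<^bold>\<rightarrow> (\<phi> \<^bold>\<rightarrow> \<chi>)))"
| ax_C: "derivable ((\<phi> \<^bold>\<rightarrow> (\<psi> \<^bold>\<rightarrow> \<chi>)) \<^bold>\<rightarrow> (\<psi> \<^bold>\<rightarrow> (\<phi> \<^bold>\<rightarrow> \<chi>)))"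
| ax_I: "derivable (\<phi> \<^bold>\<rightarrow> \<phi>)"
| ax_A: "derivable (((\<phi> \<^bold>\<rightarrow> \<psi>) \<^bold>\<rightarrow> \<psi>) \<^bold>\<rightarrow> \<phi>)"
| ax_K: "derivable (Box (\<phi> \<^bold>\<rightarrow> \<psi>) \<^bold>\<rightarrow> (Box \<phi> \<^bold>\<rightarrow> Box \<psi>))"
| ax_D: "n \<ge> 2 \<Longrightarrow> derivable (Box (mult n \<phi>) \<^bold>\<rightarrow> mult n (Box \<phi>))"
| mp: "derivable \<phi> \<Longrightarrow> derivable (\<phi> \<^bold>\<rightarrow> \<psi>) \<Longrightarrow> derivable \<psi>"
| nec: "derivable \<phi> \<Longrightarrow> derivable (Box \<phi>)"
| con: "n \<ge> 2 \<Longrightarrow> derivable (mult n \<phi>) \<Longrightarrow> derivable \<phi>"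

end

theory Submission
  imports Defs
begin

lemma eval_Zero[simp]: "eval R V Zero x = 0"
  by (simp add: Zero_def)

lemma eval_mult[simp]: "eval R V (mult n \<phi>) x = real n * eval R V \<phi> x"
  by (induction n) (simp_all add: Fus_def Neg_def algebra_simps)

lemma bounded_eval:
  assumes m: "is_model W R V"
  shows "\<exists>c. \<forall>x\<in>W. \<bar>eval R V \<phi> x\<bar> \<le> c"
proof (induction \<phi>)
  case (Var p)
  from m obtain r where r: "\<forall>p. \<forall>x\<in>W. - r \<le> V p x \<and> V p x \<le> r"
    unfolding is_model_def by blast
  have "\<bar>eval R V (Var p) x\<bar> \<le> r" if "x \<in> W" for x
  proof -
    have "- r \<le> V p x" "V p x \<le> r" using r that by blast+
    then show ?thesis by (simp add: abs_le_iff)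
  qed
  then show ?case by blast
next
  case (Imp a b)
  then obtain c d where c: "\<forall>x\<in>W. \<bar>eval R V a x\<bar> \<le> c" and d: "\<forall>x\<in>W. \<bar>eval R V b x\<bar> \<le> d" by blast
  have "\<bar>eval R V (Imp a b) x\<bar> \<le> c + d" if "x \<in> W" for x
  proof -
    have h1: "\<bar>eval R V a x\<bar> \<le> c" using c that by blast
    have h2: "\<bar>eval R V b x\<bar> \<le> d" using d that by blast
    show ?thesis using h1 h2 by (simp add: abs_le_iff)
  qed
  then show ?case by blast
next
  case (Box a)
  then obtain c where c: "\<forall>x\<in>W. \<bar>eval R V a x\<bar> \<le> c" by blast
  have inW: "R x y \<Longrightarrow> y \<in> W" for x y using m unfolding is_model_def by blast
  have "\<bar>eval R V (Box a) x\<bar> \<le> \<bar>c\<bar>" if "x \<in> W" for x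
  proof (cases "{y. R x y} = {}")
    case True then show ?thesis unfolding eval.simps if_P[OF True] by simp
  next
    case False
    then obtain y0 where y0: "R x y0" by blast
    let ?S = "{eval R V a y | y. R x y}"
    have ne: "?S \<noteq> {}" using y0 by blast
    have lb: "\<forall>z\<in>?S. -c \<le> z \<and> z \<le> c"
    proof clarify
      fix y assume "R x y"
      then have "\<bar>eval R V a y\<bar> \<le> c" using c inW by blast
      then show "-c \<le> eval R V a y \<and> eval R V a y \<le> c" by (simp add: abs_le_iff)
    qed
    then have bd: "bdd_below ?S" unfolding bdd_below_def by blast
    have y0S: "eval R V a y0 \<in> ?S" using y0 by blast
    have "Inf ?S \<le> eval R V a y0" using bd y0S by (rule cInf_lower[rotated])
    moreover have "eval R V a y0 \<le> c" using lb y0S by blast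
    moreover have "-c \<le> Inf ?S" using ne lb
      by (intro cInf_greatest) blast+
    ultimately show ?thesis unfolding eval.simps if_not_P[OF False] by (simp add: abs_le_iff)
  qed
  then show ?case by blast
qed

lemma bdd_succ:
  assumes m: "is_model W R V" and x: "x \<in> W"
  shows "bdd_below {eval R V a y | y. R x y}"
proof -
  obtain c where c: "\<forall>x\<in>W. \<bar>eval R V a x\<bar> \<le> c" using bounded_eval[OF m] by blast
  have inW: "R x y \<Longrightarrow> y \<in> W" for y using m unfolding is_model_def by blast
    have lb: "\<forall>z\<in>{eval R V a y | y. R x y}. -c \<le> z"
  proof clarify
    fix y assume "R x y"
    then have "\<bar>eval R V a y\<bar> \<le> c" using c inW by blast
    then show "-c \<le> eval R V a y" by linarith
  qed
  then show ?thesis unfolding bdd_below_def by blast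
qed

lemma sound:
  assumes "derivable \<phi>"
  shows "is_model W R V \<Longrightarrow> x \<in> W \<Longrightarrow> eval R V \<phi> x \<ge> 0"
  using assms
proof (induction arbitrary: x rule: derivable.induct)
  case (ax_K \<phi> \<psi>)
  show ?case
  proof (cases "{y. R x y} = {}")
    case True then show ?thesis by simp
  next
    case False
    let ?A = "{eval R V (\<phi> \<^bold>\<rightarrow> \<psi>) y | y. R x y}"
    let ?B = "{eval R V \<phi> y | y. R x y}"
    let ?C = "{eval R V \<psi> y | y. R x y}"
    have bA: "bdd_below ?A" and bB: "bdd_below ?B"
      by (rule bdd_succ[OF ax_K(1,2)])+
    have "Inf ?A + Inf ?B \<le> Inf ?C"
    proof (rule cInf_greatest)
      show "?C \<noteq> {}" using False by blast
      fix z assume "z \<in> ?C"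
      then obtain y where y: "R x y" "z = eval R V \<psi> y" by blast
      have "Inf ?A \<le> eval R V (\<phi> \<^bold>\<rightarrow> \<psi>) y" using bA y by (auto intro!: cInf_lower)
      moreover have "Inf ?B \<le> eval R V \<phi> y" using bB y by (auto intro!: cInf_lower)
      ultimately show "Inf ?A + Inf ?B \<le> z" using y by simp
    qed
    then show ?thesis unfolding eval.simps if_not_P[OF False] by linarith
  qed
next
  case (ax_D n \<phi>)
  show ?case
  proof (cases "{y. R x y} = {}")
    case True then show ?thesis by simp
  next
    case False
    let ?A = "{eval R V (mult n \<phi>) y | y. R x y}"
    let ?B = "{eval R V \<phi> y | y. R x y}"
    have bA: "bdd_below ?A"
      by (rule bdd_succ[OF ax_D(2,3)])
    have np: "real n > 0" using ax_D(1) by simp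
    have "Inf ?A / real n \<le> Inf ?B"
    proof (rule cInf_greatest)
      show "?B \<noteq> {}" using False by blast
      fix z assume "z \<in> ?B"
      then obtain y where y: "R x y" "z = eval R V \<phi> y" by blast
      have "Inf ?A \<le> eval R V (mult n \<phi>) y" using bA y by (auto intro!: cInf_lower)
      then show "Inf ?A / real n \<le> z" using y np by (simp add: pos_divide_le_eq[OF np] mult_ac)
    qed
    then have "Inf ?A \<le> real n * Inf ?B" by (simp add: pos_divide_le_eq[OF np] mult_ac)
    then show ?thesis unfolding eval.simps eval_mult if_not_P[OF False] by linarith
  qed
next
  case (mp \<phi> \<psi>)
  then have "0 \<le> eval R V \<phi> x" "0 \<le> eval R V (\<phi> \<^bold>\<rightarrow> \<psi>) x" by blast+
  then show ?case by simp
next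
  case (nec \<phi>)
  have inW: "R x y \<Longrightarrow> y \<in> W" for y using nec unfolding is_model_def by blast
  show ?case
  proof (cases "{y. R x y} = {}")
    case True then show ?thesis by simp
  next
    case False
    have "0 \<le> Inf {eval R V \<phi> y | y. R x y}"
      using False nec inW by (intro cInf_greatest) auto
    then show ?thesis unfolding eval.simps if_not_P[OF False] .
  qed
next
  case (con n \<phi>)
  then have "0 \<le> eval R V (mult n \<phi>) x" by blast
  then have "real n * eval R V \<phi> x \<ge> 0" by (simp only: eval_mult)
  moreover have "real n > 0" using con(1) by simp
  ultimately show ?case by (simp add: zero_le_mult_iff)
next
  case ax_B show ?case by (simp only: eval.simps; linarith)
next
  case ax_C show ?case by (simp only: eval.simps; linarith)
next
  case ax_I show ?case by (simp only: eval.simps; linarith)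
next
  case ax_A show ?case by (simp only: eval.simps; linarith)
qed

theorem proposition4p1:
  fixes \<phi> :: fm
  assumes "derivable \<phi>"
  shows "KA_valid TYPE('w) \<phi>"
  unfolding KA_valid_def
proof (intro allI impI ballI)
  fix W :: "'w set" and R V x
  assume "is_model W R V" "x \<in> W"
  then show "0 \<le> eval R V \<phi> x" by (rule sound[OF assms])
qed

end
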